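(* Let $\mathbb F$ be algebraically closed with $\operatorname{char}\mathbb F\ne2$, $a,b,c\in\mathbb F$, $d\in\mathbb N$. The $\Re$-module $R_d(a,b,c)$ is irreducible if and only if both (i) $\operatorname{char}\mathbb F=0$ or $\operatorname{char}\mathbb F>d$, and (ii) none of $a+b+c+1$, $-a+b+c$, $a-b+c$, $a+b-c$ lies in $\{\tfrac d2-i\mid i=1,2,\dots,d\}$.
   Context: The Racah algebra $\Re$ is the unital associative $\mathbb F$-algebra with generators $A,B,C,D$ and relations $[A,B]=[B,C]=[C,A]=2D$ together with the requirement that each of $\alpha:=[A,D]+AC-BA$, $\beta:=[B,D]+BA-CB$, $\gamma:=[C,D]+CB-AC$ is central in $\Re$; $\delta:=A+B+C$. For $a,b,c\in\mathbb F$ and $d\in\mathbb N$ set $\theta_i=(a+\tfrac d2-i)(a+\tfrac d2-i+1)$, $\theta_i^*=(b+\tfrac d2-i)(b+\tfrac d2-i+1)$, $\varphi_i=i(i-d-1)(a+b+c+\tfrac d2-i+2)(a+b-c+\tfrac d2-i+1)$. $R_d(a,b,c)$ denotes the $(d+1)$-dimensional $\Re$-module with a basis $v_0,\dots,v_d$ such that $Av_i=\theta_iv_i+v_{i+1}$ ($v_{d+1}=0$), $Bv_i=\theta_i^*v_i+\varphi_iv_{i-1}$ ($v_{-1}=0$), and $\alpha,\beta,\delta$ act as the scalars $(c-b)(c+b+1)(a-\tfrac d2)(a+\tfrac d2+1)$, $(a-c)(a+c+1)(b-\tfrac d2)(b+\tfrac d2+1)$, $\tfrac d2(\tfrac d2+1)+a(a+1)+b(b+1)+c(c+1)$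 respectively (exists, unique up to isomorphism). *)

theory Defs
  imports "HOL-Computational_Algebra.Polynomial"
begin

text \<open>Coordinate space of R_d(a,b,c): a vector sum_i x_i v_i is represented by its
  coefficient function x :: nat => 'a, supported in {0..d}.\<close>

definition coord_space :: "nat \<Rightarrow> (nat \<Rightarrow> 'a::field) set" where
  "coord_space d = {x. \<forall>j>d. x j = 0}"

definition racah_theta :: "'a::field \<Rightarrow> nat \<Rightarrow> nat \<Rightarrow> 'a" where
  "racah_theta a d i = (a + of_nat d / 2 - of_nat i) * (a + of_nat d / 2 - of_nat i + 1)"

definition racah_phi :: "'a::field \<Rightarrow> 'a \<Rightarrow> 'a \<Rightarrow> nat \<Rightarrow> nat \<Rightarrow> 'a" where
  "racah_phi a b c d i = of_nat i * (of_nat i - of_nat d - 1)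
      * (a + b + c + of_nat d / 2 - of_nat i + 2) * (a + b - c + of_nat d / 2 - of_nat i + 1)"

text \<open>A v_i = theta_i v_i + v_(i+1), with v_(d+1) = 0.\<close>
definition RA :: "'a::field \<Rightarrow> nat \<Rightarrow> (nat \<Rightarrow> 'a) \<Rightarrow> (nat \<Rightarrow> 'a)" where
  "RA a d x = (\<lambda>j. if j \<le> d then racah_theta a d j * x j + (if j \<ge> 1 then x (j - 1) else 0) else 0)"

text \<open>B v_i = theta*_i v_i + phi_i v_(i-1), with v_(-1) = 0.\<close>
definition RB :: "'a::field \<Rightarrow> 'a \<Rightarrow> 'a \<Rightarrow> nat \<Rightarrow> (nat \<Rightarrow> 'a) \<Rightarrow> (nat \<Rightarrow> 'a)" where
  "RB a b c d x = (\<lambda>j. if j \<le> d then racah_theta b d j * x j + racah_phi a b c d (j + 1) * x (j + 1) else 0)"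

definition racah_delta :: "'a::field \<Rightarrow> 'a \<Rightarrow> 'a \<Rightarrow> nat \<Rightarrow> 'a" where
  "racah_delta a b c d = of_nat d / 2 * (of_nat d / 2 + 1) + a * (a + 1) + b * (b + 1) + c * (c + 1)"

text \<open>C = delta - A - B (delta = A + B + C acts as a scalar), D = [A,B]/2.\<close>
definition RC :: "'a::field \<Rightarrow> 'a \<Rightarrow> 'a \<Rightarrow> nat \<Rightarrow> (nat \<Rightarrow> 'a) \<Rightarrow> (nat \<Rightarrow> 'a)" where
  "RC a b c d x = (\<lambda>j. racah_delta a b c d * x j - RA a d x j - RB a b c d x j)"

definition RD :: "'a::field \<Rightarrow> 'a \<Rightarrow> 'a \<Rightarrow> nat \<Rightarrow> (nat \<Rightarrow> 'a) \<Rightarrow> (nat \<Rightarrow> 'a)" where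
  "RD a b c d x = (\<lambda>j. (RA a d (RB a b c d x) j - RB a b c d (RA a d x) j) / 2)"

definition is_submodule :: "(nat \<Rightarrow> 'a::field) set \<Rightarrow> ((nat \<Rightarrow> 'a) \<Rightarrow> (nat \<Rightarrow> 'a)) set
     \<Rightarrow> (nat \<Rightarrow> 'a) set \<Rightarrow> bool" where
  "is_submodule V ops W \<longleftrightarrow> W \<subseteq> V \<and> (\<lambda>_. 0) \<in> W
     \<and> (\<forall>x\<in>W. \<forall>y\<in>W. (\<lambda>j. x j + y j) \<in> W)
     \<and> (\<forall>s. \<forall>x\<in>W. (\<lambda>j. s * x j) \<in> W)
     \<and> (\<forall>f\<in>ops. \<forall>x\<in>W. f x \<in> W)"

definition irreducible_module :: "(nat \<Rightarrow> 'a::field) set \<Rightarrow> ((nat \<Rightarrow> 'a) \<Rightarrow> (nat \<Rightarrow> 'a)) set \<Rightarrow> bool" where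
  "irreducible_module V ops \<longleftrightarrow> V \<noteq> {\<lambda>_. 0} \<and>
     (\<forall>W. is_submodule V ops W \<longrightarrow> W = {\<lambda>_. 0} \<or> W = V)"

definition R_irreducible :: "'a::field \<Rightarrow> 'a \<Rightarrow> 'a \<Rightarrow> nat \<Rightarrow> bool" where
  "R_irreducible a b c d \<longleftrightarrow> irreducible_module (coord_space d)
     {RA a d, RB a b c d, RC a b c d, RD a b c d}"

end

theory Submission imports Defs begin

locale racah =
  fixes a b c :: "'a::field" and d :: nat
  assumes two: "(2::'a) \<noteq> 0"
begin

abbreviation "th i \<equiv> racah_theta a d i"
abbreviation "ts i \<equiv> racah_theta b d i"
abbreviation "ph i \<equiv> racah_phi a b c d i"
definition ps :: "nat \<Rightarrow> 'a" where
  "ps i = of_nat i * (of_nat i - of_nat d - 1) * (a - b - c + of_nat d / 2 - of_nat i)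
      * (a - b + c + of_nat d / 2 - of_nat i + 1)"
abbreviation "A \<equiv> RA a d"
abbreviation "B \<equiv> RB a b c d"
definition e :: "nat \<Rightarrow> nat \<Rightarrow> 'a" where "e k = (\<lambda>j. if j = k \<and> k \<le> d then 1 else 0)"

lemma RA_add: "A (\<lambda>j. f j + g j) = (\<lambda>j. A f j + A g j)"
  by (auto simp: RA_def algebra_simps fun_eq_iff)
lemma RA_smult: "A (\<lambda>j. s * f j) = (\<lambda>j. s * A f j)"
  by (auto simp: RA_def algebra_simps fun_eq_iff)
lemma RA_diff: "A (\<lambda>j. f j - g j) = (\<lambda>j. A f j - A g j)"
  by (auto simp: RA_def algebra_simps fun_eq_iff)
lemma RB_add: "B (\<lambda>j. f j + g j) = (\<lambda>j. B f j + B g j)"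
  by (auto simp: RB_def algebra_simps fun_eq_iff)
lemma RB_smult: "B (\<lambda>j. s * f j) = (\<lambda>j. s * B f j)"
  by (auto simp: RB_def algebra_simps fun_eq_iff)
lemma RB_diff: "B (\<lambda>j. f j - g j) = (\<lambda>j. B f j - B g j)"
  by (auto simp: RB_def algebra_simps fun_eq_iff)
lemma RA_sum: "A (\<lambda>j. \<Sum>k\<in>K. f k j) = (\<lambda>j. \<Sum>k\<in>K. A (f k) j)"
  by (auto simp: RA_def sum_distrib_left sum.distrib fun_eq_iff)
lemma RB_sum: "B (\<lambda>j. \<Sum>k\<in>K. f k j) = (\<lambda>j. \<Sum>k\<in>K. B (f k) j)"
  by (auto simp: RB_def sum_distrib_left sum.distrib fun_eq_iff)

lemma RA_V: "A x \<in> coord_space d" by (simp add: RA_def coord_space_def)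
lemma RB_V: "B x \<in> coord_space d" by (simp add: RB_def coord_space_def)

lemma ph0: "ph 0 = 0" by (simp add: racah_phi_def)
lemma ph_top: "ph (Suc d) = 0" by (simp add: racah_phi_def)
lemma ps0: "ps 0 = 0" by (simp add: ps_def)
lemma ps_top: "ps (Suc d) = 0" by (simp add: ps_def)

lemma RA_e: "A (e k) = (\<lambda>j. th k * e k j + e (Suc k) j)"
  by (auto simp: RA_def e_def fun_eq_iff)
lemma RB_e: "B (e k) = (\<lambda>j. ts k * e k j + ph k * e (k - 1) j)"
proof
  fix j
  show "B (e k) j = ts k * e k j + ph k * e (k - 1) j"
  proof (cases "k = Suc j \<and> k \<le> d")
    case True thus ?thesis by (auto simp: RB_def e_def)
  next
    case False
    have "ph (Suc j) * e k (Suc j) = 0" using False ph_top by (auto simp: e_def)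
    moreover have "ph k * e (k - 1) j = 0"
    proof (cases "k = Suc d")
      case True thus ?thesis using ph_top by simp
    next
      case False2: False
      show ?thesis using False False2 ph0 by (cases k) (auto simp: e_def)
    qed
    ultimately show ?thesis by (auto simp: RB_def e_def)
  qed
qed


definition dl :: 'a where "dl = racah_delta a b c d"
definition al :: 'a where "al = (c - b) * (c + b + 1) * (a - of_nat d / 2) * (a + of_nat d / 2 + 1)"
definition relop :: "(nat \<Rightarrow> 'a) \<Rightarrow> nat \<Rightarrow> 'a" where
  "relop x = (\<lambda>j. A (A (B x)) j - 2 * A (B (A x)) j + B (A (A x)) j - 2 * A (A x) j
     - 2 * A (B x) j - 2 * B (A x) j + 2 * dl * A x j - 2 * al * x j)"

lemma hdef: obtains h :: 'a where "of_nat d = 2 * h" "of_nat d / 2 = h"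
proof -
  have "of_nat d = 2 * (of_nat d / 2 :: 'a)" using two by simp
  thus ?thesis using that by blast
qed


definition C2 :: "nat \<Rightarrow> 'a" where "C2 k = ts k - 2 * ts (Suc k) + ts (Suc (Suc k)) - 2"
definition C1 :: "nat \<Rightarrow> 'a" where "C1 k = (ts k * th k + ph k + ts k * th (Suc k)) - 2 * (th k * ts k + ph (Suc k) + ts (Suc k) * th (Suc k))
   + ((th k + th (Suc k)) * ts (Suc k) + ph (Suc (Suc k))) - 2 * (th k + th (Suc k)) - 2 * ts k - 2 * ts (Suc k) + 2 * dl"
definition C0 :: "nat \<Rightarrow> 'a" where "C0 k = (ph k * th (k - 1) + ts k * th k ^ 2 + ph k * th k) - 2 * (th k * ph k + th k ^ 2 * ts k + ph (Suc k) * th k)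
   + (th k ^ 2 * ts k + (th k + th (Suc k)) * ph (Suc k)) - 2 * th k ^ 2 - 2 * (ts k * th k + ph k)
   - 2 * (th k * ts k + ph (Suc k)) + 2 * dl * th k - 2 * al"
definition Cm :: "nat \<Rightarrow> 'a" where "Cm k = ph k * ((th (k - 1) - th k) ^ 2 - 2 * (th (k - 1) + th k))"

lemma C2_0: "C2 k = 0"
proof -
  obtain h :: 'a where h: "of_nat d / 2 = h" using hdef by metis
  show ?thesis unfolding C2_def racah_theta_def h by (simp only: of_nat_Suc) algebra
qed
lemma Cm_0: "Cm k = 0"
proof (cases k)
  case 0 thus ?thesis by (simp add: Cm_def ph0)
next
  case (Suc m)
  obtain h :: 'a where h: "of_nat d / 2 = h" using hdef by metis
  show ?thesis unfolding Cm_def racah_theta_def h Suc by (simp only: of_nat_Suc diff_Suc_1) algebra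
qed
lemma C1_0: "C1 k = 0"
proof -
  obtain h :: 'a where h: "of_nat d / 2 = h" "of_nat d = 2 * h" using hdef by metis
  show ?thesis unfolding C1_def racah_theta_def racah_phi_def dl_def racah_delta_def h(1) unfolding h(2) by (simp only: of_nat_Suc) algebra
qed
lemma C0_0: "C0 k = 0"
proof (cases k)
  case 0
  obtain h :: 'a where h: "of_nat d / 2 = h" "of_nat d = 2 * h" using hdef by metis
  show ?thesis unfolding C0_def racah_theta_def racah_phi_def dl_def al_def racah_delta_def h(1) 0 unfolding h(2) by (simp only: of_nat_Suc of_nat_0 diff_0_eq_0) algebra
next
  case (Suc m)
  obtain h :: 'a where h: "of_nat d / 2 = h" "of_nat d = 2 * h" using hdef by metis
  show ?thesis unfolding C0_def racah_theta_def racah_phi_def dl_def al_def racah_delta_def h(1) Suc unfolding h(2) by (simp only: of_nat_Suc diff_Suc_1) algebra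
qed

lemma relop_e_expand: "relop (e k) j = C2 k * e (Suc (Suc k)) j + C1 k * e (Suc k) j + C0 k * e k j + Cm k * e (k - 1) j"
proof (cases k)
  case 0
  show ?thesis unfolding 0
    apply (simp add: relop_def RA_e RB_e RA_add RB_add RA_smult RB_smult ph0)
    apply (simp only: C2_def C1_def C0_def Cm_def ph0 diff_0_eq_0)
    apply algebra
    done
next
  case (Suc m)
  show ?thesis unfolding Suc
    apply (simp add: relop_def RA_e RB_e RA_add RB_add RA_smult RB_smult)
    apply (simp only: C2_def C1_def C0_def Cm_def diff_Suc_1)
    apply algebra
    done
qed

lemma relop_e: "relop (e k) j = 0"
  using relop_e_expand C2_0 C1_0 C0_0 Cm_0 by simp


lemma relop_sum: "relop (\<lambda>j. \<Sum>k\<in>K. f k j) = (\<lambda>j. \<Sum>k\<in>K. relop (f k) j)"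
  by (simp add: relop_def RA_sum RB_sum sum_subtractf sum.distrib sum_distrib_left fun_eq_iff)

lemma relop_smult: "relop (\<lambda>j. s * f j) = (\<lambda>j. s * relop f j)"
  by (simp add: relop_def RA_smult RB_smult algebra_simps fun_eq_iff)

lemma V_repr: "x \<in> coord_space d \<Longrightarrow> (\<lambda>j. \<Sum>k\<in>{..d}. x k * e k j) = x"
proof
  fix j assume x: "x \<in> coord_space d"
  show "(\<Sum>k\<in>{..d}. x k * e k j) = x j"
  proof (cases "j \<le> d")
    case True
    have "(\<Sum>k\<in>{..d}. x k * e k j) = (\<Sum>k\<in>{..d}. if k = j then x k else 0)"
      by (rule sum.cong) (auto simp: e_def)
    also have "\<dots> = x j" using True by simp
    finally show ?thesis .
  next
    case False
    thus ?thesis using x by (auto simp: e_def coord_space_def intro!: sum.neutral)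
  qed
qed

lemma relop_V: "x \<in> coord_space d \<Longrightarrow> relop x j = 0"
proof -
  assume x: "x \<in> coord_space d"
  have "relop x j = relop (\<lambda>j. \<Sum>k\<in>{..d}. x k * e k j) j" using V_repr[OF x] by simp
  also have "\<dots> = (\<Sum>k\<in>{..d}. x k * relop (e k) j)"
    by (simp add: relop_sum relop_smult)
  also have "\<dots> = 0" by (simp add: relop_e)
  finally show ?thesis .
qed


definition L :: "nat \<Rightarrow> (nat \<Rightarrow> 'a) \<Rightarrow> nat \<Rightarrow> 'a" where
  "L m x = (\<lambda>j. A x j - th m * x j)"

fun cp :: "nat list \<Rightarrow> (nat \<Rightarrow> 'a) \<Rightarrow> nat \<Rightarrow> 'a" where
  "cp [] x = x"
| "cp (m # ms) x = L m (cp ms x)"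

lemma L_comm: "L m (L n x) = L n (L m x)"
  by (simp add: L_def RA_diff RA_smult fun_eq_iff) (simp add: algebra_simps)

lemma L_add: "L m (\<lambda>j. f j + g j) = (\<lambda>j. L m f j + L m g j)"
  by (simp add: L_def RA_add fun_eq_iff algebra_simps)
lemma L_smult: "L m (\<lambda>j. s * f j) = (\<lambda>j. s * L m f j)"
  by (simp add: L_def RA_smult fun_eq_iff algebra_simps)
lemma L_V: "x \<in> coord_space d \<Longrightarrow> L m x \<in> coord_space d"
  by (simp add: L_def coord_space_def RA_def)

lemma cp_append: "cp (xs @ ys) x = cp xs (cp ys x)"
  by (induction xs) auto
lemma cp_L: "cp ms (L n x) = L n (cp ms x)"
  by (induction ms) (auto simp: L_comm)
lemma cp_rev: "cp (rev ms) x = cp ms x"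
  by (induction ms arbitrary: x) (auto simp: cp_append cp_L)
lemma cp_add: "cp ms (\<lambda>j. f j + g j) = (\<lambda>j. cp ms f j + cp ms g j)"
  by (induction ms) (auto simp: L_add)
lemma cp_smult: "cp ms (\<lambda>j. s * f j) = (\<lambda>j. s * cp ms f j)"
  by (induction ms) (auto simp: L_smult)
lemma cp_V: "x \<in> coord_space d \<Longrightarrow> cp ms x \<in> coord_space d"
  by (induction ms) (auto simp: L_V)

lemma kill:
  assumes x: "x \<in> coord_space d" and z: "\<forall>j<m. x j = 0" and mk: "m \<le> k"
  shows "\<forall>j<k. cp (rev [m..<k]) x j = 0"
  using mk
proof (induction k)
  case 0 thus ?case by simp
next
  case (Suc k)
  show ?case
  proof (cases "m = Suc k")
    case True thus ?thesis using z by simp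
  next
    case False
    hence mk: "m \<le> k" using Suc.prems by simp
    define y where "y = cp (rev [m..<k]) x"
    have y0: "\<forall>j<k. y j = 0" using Suc.IH[OF mk] y_def by simp
    have yV: "y \<in> coord_space d" using cp_V[OF x] y_def by simp
    have eq: "cp (rev [m..<Suc k]) x = L k y" using mk y_def by simp
    show ?thesis unfolding eq
    proof (intro allI impI)
      fix j assume "j < Suc k"
      hence "j < k \<or> j = k" by auto
      thus "L k y j = 0"
      proof
        assume "j < k" thus ?thesis using y0 by (auto simp: L_def RA_def)
      next
        assume jk: "j = k"
        show ?thesis
        proof (cases "k \<le> d")
          case True thus ?thesis using y0 jk by (auto simp: L_def RA_def)
        next
          case False thus ?thesis using yV jk by (auto simp: L_def RA_def coord_space_def)
        qed
      qed
    qed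
  qed
qed

definition u :: "nat \<Rightarrow> nat \<Rightarrow> 'a" where "u i = cp [Suc i..<Suc d] (e 0)"

lemma e_V: "e k \<in> coord_space d" by (simp add: e_def coord_space_def)
lemma u_V: "u i \<in> coord_space d" by (simp add: u_def cp_V e_V)
lemma u_top: "u d = e 0" by (simp add: u_def)
lemma u_Suc_d: "u (Suc d) = e 0" by (simp add: u_def)
lemma u_step: "i < d \<Longrightarrow> u i = L (Suc i) (u (Suc i))"
proof -
  assume "i < d"
  hence "[Suc i..<Suc d] = Suc i # [Suc (Suc i)..<Suc d]" by (simp add: upt_conv_Cons del: upt_Suc)
  thus ?thesis by (simp add: u_def)
qed

lemma A_u: "1 \<le> i \<Longrightarrow> i \<le> d \<Longrightarrow> A (u i) = (\<lambda>j. th i * u i j + u (i - 1) j)"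
proof -
  assume i: "1 \<le> i" "i \<le> d"
  have "u (i - 1) = L i (u i)" using u_step[of "i - 1"] i by simp
  thus ?thesis by (simp add: L_def fun_eq_iff)
qed

lemma A_u0: "A (u 0) = (\<lambda>j. th 0 * u 0 j)"
proof -
  have "[0..<Suc d] = 0 # [Suc 0..<Suc d]" by (simp add: upt_conv_Cons del: upt_Suc)
  hence "L 0 (u 0) = cp [0..<Suc d] (e 0)" by (simp add: u_def)
  also have "\<dots> = cp (rev [0..<Suc d]) (e 0)" using cp_rev[of "rev [0..<Suc d]"] by simp
  finally have eq: "L 0 (u 0) = cp (rev [0..<Suc d]) (e 0)" .
  have z: "\<forall>j<Suc d. L 0 (u 0) j = 0" unfolding eq by (rule kill[OF e_V]) auto
  have "L 0 (u 0) \<in> coord_space d" by (simp add: L_V u_V)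
  hence "\<forall>j. L 0 (u 0) j = 0"
  proof (intro allI)
    fix j assume V: "L 0 (u 0) \<in> coord_space d"
    show "L 0 (u 0) j = 0"
    proof (cases "j < Suc d")
      case True thus ?thesis using z by blast
    next
      case False thus ?thesis using V by (simp add: coord_space_def)
    qed
  qed
  thus ?thesis by (auto simp: L_def fun_eq_iff)
qed

lemma u_tri: "n \<le> d \<Longrightarrow> u (d - n) n = 1 \<and> (\<forall>j>n. u (d - n) j = 0)"
proof (induction n)
  case 0 thus ?case by (simp add: u_top e_def)
next
  case (Suc n)
  have IH: "u (d - n) n = 1" "\<forall>j>n. u (d - n) j = 0" using Suc by auto
  have eq: "u (d - Suc n) = L (d - n) (u (d - n))"
    using u_step[of "d - Suc n"] Suc.prems by (simp add: Suc_diff_Suc)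
  show ?case unfolding eq using IH Suc.prems by (auto simp: L_def RA_def)
qed


lemma step_abstract:
  assumes A2: "A U2 = (\<lambda>j. t2 * U2 j + U1 j)" and A1: "A U1 = (\<lambda>j. t1 * U1 j + U0 j)"
    and B2: "B U2 = (\<lambda>j. s2 * U2 j + Z j)" and AZ: "A Z = (\<lambda>j. t3 * Z j + p3 * U2 j)"
    and B1: "B U1 = (\<lambda>j. s1 * U1 j + p2 * U2 j)" and R: "relop U2 j = 0"
    and hc0: "c0 = - (s2 - 2 * s1 - 2)"
    and hc1: "c1 = - ((s2 * t2 + p3) + s2 * t1 - 2 * ((t2 * s2 + p2) + s1 * t1) + (t2 + t1) * s1 - 2 * (t2 + t1) - 2 * s2 - 2 * s1 + 2 * dl)"
    and hc2: "c2 = - ((s2 * t2 + p3) * t2 + t3 * p3 - 2 * ((t2 * s2 + p2) * t2 + t2 * p3) + t2 ^ 2 * s2 + (t2 + t1) * p2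
         - 2 * t2 ^ 2 - 2 * (s2 * t2 + p3) - 2 * (t2 * s2 + p2) + 2 * dl * t2 - 2 * al)"
    and hcz: "cz = - ((t3 - t2) ^ 2 - 2 * (t3 + t2))"
  shows "B U0 j = c0 * U0 j + c1 * U1 j + c2 * U2 j + cz * Z j"
proof -
  have "relop U2 j = A (A (B U2)) j - 2 * A (B (A U2)) j + B (A (A U2)) j - 2 * A (A U2) j
     - 2 * A (B U2) j - 2 * B (A U2) j + 2 * dl * A U2 j - 2 * al * U2 j" by (simp add: relop_def)
  also have "\<dots> = 
      (((s2 * t2 + p3) * t2 + t3 * p3) * U2 j + ((s2 * t2 + p3) + s2 * t1) * U1 j + s2 * U0 j + t3 ^ 2 * Z j)
    - 2 * (((t2 * s2 + p2) * t2 + t2 * p3) * U2 j + ((t2 * s2 + p2) + s1 * t1) * U1 j + s1 * U0 j + t2 * t3 * Z j)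
    + (t2 ^ 2 * (s2 * U2 j + Z j) + (t2 + t1) * (s1 * U1 j + p2 * U2 j) + B U0 j)
    - 2 * (t2 ^ 2 * U2 j + (t2 + t1) * U1 j + U0 j)
    - 2 * ((s2 * t2 + p3) * U2 j + s2 * U1 j + t3 * Z j)
    - 2 * ((t2 * s2 + p2) * U2 j + s1 * U1 j + t2 * Z j)
    + 2 * dl * (t2 * U2 j + U1 j) - 2 * al * U2 j"
    by (simp add: A2 A1 B2 AZ B1 RA_add RA_smult RB_add RB_smult algebra_simps power2_eq_square)
  finally have "\<dots> = 0" using R by simp
  thus ?thesis unfolding hc0 hc1 hc2 hcz by algebra
qed


lemma coefs_step:
  assumes i: "Suc (Suc i) \<le> d"
  shows "- (ts (d - Suc (Suc i)) - 2 * ts (d - Suc i) - 2) = ts (d - i)"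
    and "- ((ts (d - Suc (Suc i)) * th (Suc (Suc i)) + ps (Suc (Suc (Suc i)))) + ts (d - Suc (Suc i)) * th (Suc i)
          - 2 * ((th (Suc (Suc i)) * ts (d - Suc (Suc i)) + ps (Suc (Suc i))) + ts (d - Suc i) * th (Suc i))
          + (th (Suc (Suc i)) + th (Suc i)) * ts (d - Suc i) - 2 * (th (Suc (Suc i)) + th (Suc i))
          - 2 * ts (d - Suc (Suc i)) - 2 * ts (d - Suc i) + 2 * dl) = ps (Suc i)"
    and "- ((ts (d - Suc (Suc i)) * th (Suc (Suc i)) + ps (Suc (Suc (Suc i)))) * th (Suc (Suc i))
          + th (Suc (Suc (Suc i))) * ps (Suc (Suc (Suc i)))
          - 2 * ((th (Suc (Suc i)) * ts (d - Suc (Suc i)) + ps (Suc (Suc i))) * th (Suc (Suc i))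
                 + th (Suc (Suc i)) * ps (Suc (Suc (Suc i))))
          + th (Suc (Suc i)) ^ 2 * ts (d - Suc (Suc i)) + (th (Suc (Suc i)) + th (Suc i)) * ps (Suc (Suc i))
          - 2 * th (Suc (Suc i)) ^ 2 - 2 * (ts (d - Suc (Suc i)) * th (Suc (Suc i)) + ps (Suc (Suc (Suc i))))
          - 2 * (th (Suc (Suc i)) * ts (d - Suc (Suc i)) + ps (Suc (Suc i)))
          + 2 * dl * th (Suc (Suc i)) - 2 * al) = 0"
    and "(th (Suc (Suc (Suc i))) - th (Suc (Suc i))) ^ 2 - 2 * (th (Suc (Suc (Suc i))) + th (Suc (Suc i))) = 0"
proof -
  obtain h :: 'a where h: "of_nat d / 2 = h" "of_nat d = 2 * h" using hdef by metis
  have n2: "of_nat (d - Suc (Suc i)) = (of_nat d - of_nat i - 2 :: 'a)" using i by (simp add: of_nat_diff)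
  have n1: "of_nat (d - Suc i) = (of_nat d - of_nat i - 1 :: 'a)" using i by (simp add: of_nat_diff)
  have n0: "of_nat (d - i) = (of_nat d - of_nat i :: 'a)" using i by (simp add: of_nat_diff)
  show "- (ts (d - Suc (Suc i)) - 2 * ts (d - Suc i) - 2) = ts (d - i)"
    unfolding racah_theta_def n0 n1 n2 h(1) unfolding h(2) by algebra
  show "- ((ts (d - Suc (Suc i)) * th (Suc (Suc i)) + ps (Suc (Suc (Suc i)))) + ts (d - Suc (Suc i)) * th (Suc i)
          - 2 * ((th (Suc (Suc i)) * ts (d - Suc (Suc i)) + ps (Suc (Suc i))) + ts (d - Suc i) * th (Suc i))
          + (th (Suc (Suc i)) + th (Suc i)) * ts (d - Suc i) - 2 * (th (Suc (Suc i)) + th (Suc i))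
          - 2 * ts (d - Suc (Suc i)) - 2 * ts (d - Suc i) + 2 * dl) = ps (Suc i)"
    unfolding racah_theta_def ps_def dl_def racah_delta_def n0 n1 n2 h(1) unfolding h(2)
    by (simp only: of_nat_Suc) algebra
  show "- ((ts (d - Suc (Suc i)) * th (Suc (Suc i)) + ps (Suc (Suc (Suc i)))) * th (Suc (Suc i))
          + th (Suc (Suc (Suc i))) * ps (Suc (Suc (Suc i)))
          - 2 * ((th (Suc (Suc i)) * ts (d - Suc (Suc i)) + ps (Suc (Suc i))) * th (Suc (Suc i))
                 + th (Suc (Suc i)) * ps (Suc (Suc (Suc i))))
          + th (Suc (Suc i)) ^ 2 * ts (d - Suc (Suc i)) + (th (Suc (Suc i)) + th (Suc i)) * ps (Suc (Suc i))
          - 2 * th (Suc (Suc i)) ^ 2 - 2 * (ts (d - Suc (Suc i)) * th (Suc (Suc i)) + ps (Suc (Suc (Suc i))))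
          - 2 * (th (Suc (Suc i)) * ts (d - Suc (Suc i)) + ps (Suc (Suc i)))
          + 2 * dl * th (Suc (Suc i)) - 2 * al) = 0"
    unfolding racah_theta_def ps_def dl_def al_def racah_delta_def n0 n1 n2 h(1) unfolding h(2)
    by (simp only: of_nat_Suc) algebra
  show "(th (Suc (Suc (Suc i))) - th (Suc (Suc i))) ^ 2 - 2 * (th (Suc (Suc (Suc i))) + th (Suc (Suc i))) = 0"
    unfolding racah_theta_def h(1) by (simp only: of_nat_Suc) algebra
qed

lemma coef_base: "1 \<le> d \<Longrightarrow> (th 0 - th d) * ts 0 + ph 1 = ts 1 * (th 0 - th d) + ps d"
proof -
  obtain h :: 'a where h: "of_nat d / 2 = h" "of_nat d = 2 * h" using hdef by metis
  show ?thesis unfolding racah_theta_def racah_phi_def ps_def h(1) unfolding h(2)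
    by simp algebra
qed


lemma B_u_aux: "n \<le> d \<Longrightarrow> B (u (d - n)) = (\<lambda>j. ts (d - (d - n)) * u (d - n) j + ps (Suc (d - n)) * u (Suc (d - n)) j)"
proof (induction n rule: less_induct)
  case (less n)
  show ?case
  proof (cases n)
    case 0
    show ?thesis unfolding 0 by (simp add: u_top u_Suc_d RB_e ph0 ps_top fun_eq_iff)
  next
    case (Suc n1)
    note N1 = Suc
    show ?thesis
    proof (cases n1)
      case 0
      have d1: "1 \<le> d" using less.prems N1 0 by simp
      have dd: "d - n = d - 1" "Suc (d - 1) = d" "d - (d - 1) = 1" using N1 0 d1 by auto
      have ud: "u (d - 1) = (\<lambda>j. (th 0 - th d) * e 0 j + e 1 j)"
        using u_step[of "d - 1"] d1 by (simp add: u_top L_def RA_e fun_eq_iff algebra_simps)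
      have cb: "(th 0 - th d) * ts 0 + ph (Suc 0) = ts (Suc 0) * (th 0 - th d) + ps d" using coef_base[OF d1] by simp
      show ?thesis unfolding dd ud
        apply (rule ext)
        apply (simp add: RB_add RB_smult RB_e u_top ph0)
        using cb by algebra
    next
      case (Suc n2)
      note N2 = Suc
      define i where "i = d - n"
      have i2: "Suc (Suc i) \<le> d" using less.prems N1 N2 i_def by simp
      have e1: "d - n1 = Suc i" and e2: "d - n2 = Suc (Suc i)"
        using less.prems N1 N2 i_def by auto
      have IH1: "B (u (Suc i)) = (\<lambda>j. ts (d - Suc i) * u (Suc i) j + ps (Suc (Suc i)) * u (Suc (Suc i)) j)"
        using less.IH[of n1] less.prems N1 e1 by (simp add: Suc_diff_Suc)
      have IH2: "B (u (Suc (Suc i))) = (\<lambda>j. ts (d - Suc (Suc i)) * u (Suc (Suc i)) j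
           + ps (Suc (Suc (Suc i))) * u (Suc (Suc (Suc i))) j)"
        using less.IH[of n2] less.prems N1 N2 e2 by (simp add: Suc_diff_Suc)
      have A2: "A (u (Suc (Suc i))) = (\<lambda>j. th (Suc (Suc i)) * u (Suc (Suc i)) j + u (Suc i) j)"
        using A_u[of "Suc (Suc i)"] i2 by simp
      have A1: "A (u (Suc i)) = (\<lambda>j. th (Suc i) * u (Suc i) j + u i j)"
        using A_u[of "Suc i"] i2 by simp
      define Z where "Z = (\<lambda>j. ps (Suc (Suc (Suc i))) * u (Suc (Suc (Suc i))) j)"
      have AZ: "A Z = (\<lambda>j. th (Suc (Suc (Suc i))) * Z j + ps (Suc (Suc (Suc i))) * u (Suc (Suc i)) j)"
      proof (cases "Suc (Suc (Suc i)) \<le> d")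
        case True
        thus ?thesis unfolding Z_def using A_u[of "Suc (Suc (Suc i))"] by (simp only: RA_smult) (simp add: fun_eq_iff algebra_simps)
      next
        case False
        hence "Suc (Suc (Suc i)) = Suc d" using i2 by simp
        hence p0: "ps (Suc (Suc (Suc i))) = 0" using ps_top by metis
        have A0: "A (\<lambda>j. 0) = (\<lambda>j. 0)" by (simp add: RA_def fun_eq_iff)
        have "Z = (\<lambda>j. 0)" unfolding Z_def p0 by simp
        thus ?thesis unfolding p0 using A0 by simp
      qed
      have B2: "B (u (Suc (Suc i))) = (\<lambda>j. ts (d - Suc (Suc i)) * u (Suc (Suc i)) j + Z j)"
        using IH2 Z_def by simp
      have eqs: "B (u i) j = ts (d - i) * u i j + ps (Suc i) * u (Suc i) j" for j
      proof -
        have R: "relop (u (Suc (Suc i))) j = 0" by (rule relop_V[OF u_V])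
        have st: "B (u i) j = ts (d - i) * u i j + ps (Suc i) * u (Suc i) j + 0 * u (Suc (Suc i)) j + 0 * Z j"
          apply (rule step_abstract[OF A2 A1 B2 AZ IH1 R])
          apply (rule sym, rule coefs_step(1)[OF i2])
          apply (rule sym, rule coefs_step(2)[OF i2])
          apply (rule sym, rule coefs_step(3)[OF i2])
          using coefs_step(4)[OF i2] apply simp
          done
        thus ?thesis by simp
      qed
      show ?thesis using eqs i_def by (simp add: fun_eq_iff)
    qed
  qed
qed

lemma B_u: "i \<le> d \<Longrightarrow> B (u i) = (\<lambda>j. ts (d - i) * u i j + ps (Suc i) * u (Suc i) j)"
  using B_u_aux[of "d - i"] by simp


abbreviation "ops \<equiv> {RA a d, RB a b c d, RC a b c d, RD a b c d}"

definition subsp :: "(nat \<Rightarrow> 'a) set \<Rightarrow> bool" where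
  "subsp W \<longleftrightarrow> (\<lambda>_. 0) \<in> W \<and> (\<forall>x\<in>W. \<forall>y\<in>W. (\<lambda>j. x j + y j) \<in> W) \<and> (\<forall>s. \<forall>x\<in>W. (\<lambda>j. s * x j) \<in> W)"

lemma subsp_add: "subsp W \<Longrightarrow> x \<in> W \<Longrightarrow> y \<in> W \<Longrightarrow> (\<lambda>j. x j + y j) \<in> W"
  by (simp add: subsp_def)
lemma subsp_smult: "subsp W \<Longrightarrow> x \<in> W \<Longrightarrow> (\<lambda>j. s * x j) \<in> W"
  by (simp add: subsp_def)
lemma subsp_zero: "subsp W \<Longrightarrow> (\<lambda>_. 0) \<in> W"
  by (simp add: subsp_def)
lemma subsp_lin: "subsp W \<Longrightarrow> x \<in> W \<Longrightarrow> y \<in> W \<Longrightarrow> (\<lambda>j. s * x j + t * y j) \<in> W"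
  using subsp_add[of W "\<lambda>j. s * x j" "\<lambda>j. t * y j"] subsp_smult by blast
lemma subsp_sum: assumes W: "subsp W" and fin: "finite K" shows "(\<forall>k\<in>K. f k \<in> W) \<Longrightarrow> (\<lambda>j. \<Sum>k\<in>K. f k j) \<in> W"
  using fin
proof (induction K rule: finite_induct)
  case empty thus ?case by (simp add: subsp_zero W)
next
  case (insert k K)
  thus ?case using subsp_add[OF W, of "f k" "\<lambda>j. \<Sum>k\<in>K. f k j"] by simp
qed

lemma sub_of_AB:
  assumes "W \<subseteq> coord_space d" "subsp W" "\<forall>x\<in>W. A x \<in> W" "\<forall>x\<in>W. B x \<in> W"
  shows "is_submodule (coord_space d) ops W"
proof -
  have C: "RC a b c d x \<in> W" if x: "x \<in> W" for x
  proof -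
    have eq: "RC a b c d x = (\<lambda>j. dl * x j + (-1) * (A x j + B x j))"
      by (simp add: RC_def dl_def fun_eq_iff algebra_simps)
    have "(\<lambda>j. A x j + B x j) \<in> W" using assms x subsp_add by blast
    from subsp_lin[OF assms(2) x this, of dl "-1"] show ?thesis unfolding eq .
  qed
  have D: "RD a b c d x \<in> W" if x: "x \<in> W" for x
  proof -
    have eq: "RD a b c d x = (\<lambda>j. (1/2) * A (B x) j + (- 1/2) * B (A x) j)"
      by (simp add: RD_def fun_eq_iff field_simps)
    have "A (B x) \<in> W" "B (A x) \<in> W" using assms x by blast+
    from subsp_lin[OF assms(2) this, of "1/2" "-1/2"] show ?thesis unfolding eq .
  qed
  show ?thesis using assms C D unfolding is_submodule_def subsp_def by blast
qed

lemma submod_subsp: "is_submodule (coord_space d) ops W \<Longrightarrow> subsp W"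
  by (simp add: is_submodule_def subsp_def)
lemma submod_A: "is_submodule (coord_space d) ops W \<Longrightarrow> x \<in> W \<Longrightarrow> A x \<in> W"
  by (simp add: is_submodule_def)
lemma submod_B: "is_submodule (coord_space d) ops W \<Longrightarrow> x \<in> W \<Longrightarrow> B x \<in> W"
  by (simp add: is_submodule_def)
lemma submod_L: "is_submodule (coord_space d) ops W \<Longrightarrow> x \<in> W \<Longrightarrow> L m x \<in> W"
proof -
  assume W: "is_submodule (coord_space d) ops W" and x: "x \<in> W"
  have eq: "L m x = (\<lambda>j. 1 * A x j + (- th m) * x j)" by (simp add: L_def fun_eq_iff)
  from subsp_lin[OF submod_subsp[OF W] submod_A[OF W x] x, of 1 "- th m"] show ?thesis unfolding eq .
qed
lemma submod_cp: "is_submodule (coord_space d) ops W \<Longrightarrow> x \<in> W \<Longrightarrow> cp ms x \<in> W"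
  by (induction ms) (auto simp: submod_L)

lemma e_nz: "e 0 \<noteq> (\<lambda>_. 0)"
proof
  assume "e 0 = (\<lambda>_. 0)" hence "e 0 0 = 0" by simp
  thus False by (simp add: e_def)
qed


lemma Q_lemma: "x \<in> coord_space d \<Longrightarrow> cp (rev [1..<Suc d]) x = (\<lambda>j. x 0 * u 0 j)"
proof -
  assume x: "x \<in> coord_space d"
  define z where "z = (\<lambda>j. x j + (- x 0) * e 0 j)"
  have zV: "z \<in> coord_space d" using x by (auto simp: z_def coord_space_def e_def)
  have z0: "\<forall>j<1. z j = 0" by (simp add: z_def e_def)
  have k: "\<forall>j<Suc d. cp (rev [1..<Suc d]) z j = 0" by (rule kill[OF zV z0]) simp
  have kV: "cp (rev [1..<Suc d]) z \<in> coord_space d" by (rule cp_V[OF zV])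
  have kz: "cp (rev [1..<Suc d]) z = (\<lambda>j. 0)"
  proof
    fix j show "cp (rev [1..<Suc d]) z j = 0"
    proof (cases "j < Suc d")
      case True thus ?thesis using k by blast
    next
      case False thus ?thesis using kV by (simp add: coord_space_def)
    qed
  qed
  have xe: "x = (\<lambda>j. z j + x 0 * e 0 j)" by (simp add: z_def fun_eq_iff)
  have ue: "cp (rev [1..<Suc d]) (e 0) = u 0" by (simp add: cp_rev u_def)
  have "cp (rev [1..<Suc d]) x = (\<lambda>j. cp (rev [1..<Suc d]) z j + x 0 * cp (rev [1..<Suc d]) (e 0) j)"
    by (subst xe) (simp add: cp_add cp_smult)
  thus ?thesis using kz ue by simp
qed

lemma irr:
  assumes nz: "\<forall>k\<in>{1..d}. ph k \<noteq> 0 \<and> ps k \<noteq> 0"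
  shows "R_irreducible a b c d"
  unfolding R_irreducible_def irreducible_module_def
proof (intro conjI allI impI)
  show "coord_space d \<noteq> {\<lambda>_. 0::'a}"
  proof
    assume h: "coord_space d = {\<lambda>_. 0::'a}"
    have "e 0 \<in> coord_space d" by (rule e_V)
    hence "e 0 \<in> {\<lambda>_. 0}" unfolding h .
    hence "e 0 = (\<lambda>_. 0)" by simp
    thus False using e_nz by blast
  qed
next
  fix W assume Wsub: "is_submodule (coord_space d) ops W"
  have WS: "subsp W" by (rule submod_subsp[OF Wsub])
  have WV: "W \<subseteq> coord_space d" using Wsub by (simp add: is_submodule_def)
  show "W = {\<lambda>_. 0} \<or> W = coord_space d"
  proof (cases "W = {\<lambda>_. 0}")
    case True thus ?thesis by simp
  next
    case False
    then obtain w where wW: "w \<in> W" and wnz: "w \<noteq> (\<lambda>_. 0)" using subsp_zero[OF WS] by blast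
    have wV: "w \<in> coord_space d" using wW WV by blast
    obtain j0 where j0: "w j0 \<noteq> 0" using wnz by auto
    define m where "m = (LEAST j. w j \<noteq> 0)"
    have wm: "w m \<noteq> 0" unfolding m_def by (rule LeastI[of _ j0]) (rule j0)
    have below: "\<forall>j<m. w j = 0" unfolding m_def using not_less_Least by blast
    have md: "m \<le> d" using wm wV by (auto simp: coord_space_def not_le[symmetric])
    have lower: "l \<le> m \<Longrightarrow> \<exists>w'\<in>W. w' (m - l) \<noteq> 0 \<and> (\<forall>j<m - l. w' j = 0)" for l
    proof (induction l)
      case 0 thus ?case using wW wm below by auto
    next
      case (Suc l)
      then obtain w' where w'W: "w' \<in> W" and nz': "w' (m - l) \<noteq> 0" and z': "\<forall>j<m - l. w' j = 0" by auto
      define p where "p = m - Suc l"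
      have mlp: "m - l = Suc p" using Suc.prems p_def by simp
      have pd: "p < d" using Suc.prems md p_def by simp
      have phnz: "ph (Suc p) \<noteq> 0" using nz pd by simp
      have BW: "B w' \<in> W" by (rule submod_B[OF Wsub w'W])
      have "B w' p = ph (Suc p) * w' (Suc p)" using z' mlp pd by (simp add: RB_def)
      hence "B w' p \<noteq> 0" using phnz nz' mlp by simp
      moreover have "\<forall>j<p. B w' j = 0" using z' mlp by (simp add: RB_def)
      ultimately show ?case using BW p_def by auto
    qed
    obtain w0 where w0W: "w0 \<in> W" and w00: "w0 0 \<noteq> 0" using lower[of m] by auto
    have "cp (rev [1..<Suc d]) w0 \<in> W" by (rule submod_cp[OF Wsub w0W])
    hence "(\<lambda>j. w0 0 * u 0 j) \<in> W" using Q_lemma w0W WV by auto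
    from subsp_smult[OF WS this, of "1 / w0 0"] have u0W: "u 0 \<in> W" using w00 by simp
    have uW: "i \<le> d \<Longrightarrow> u i \<in> W" for i
    proof (induction i)
      case 0 thus ?case using u0W by simp
    next
      case (Suc i)
      have uiW: "u i \<in> W" using Suc by simp
      have psnz: "ps (Suc i) \<noteq> 0" using nz Suc.prems by simp
      have eq: "u (Suc i) = (\<lambda>j. (1 / ps (Suc i)) * B (u i) j + (- ts (d - i) / ps (Suc i)) * u i j)"
        using B_u[of i] Suc.prems psnz by (simp add: fun_eq_iff field_simps)
      from subsp_lin[OF WS submod_B[OF Wsub uiW] uiW, of "1 / ps (Suc i)" "- ts (d - i) / ps (Suc i)"]
      show ?case unfolding eq .
    qed
    have e0W: "e 0 \<in> W" using uW[of d] u_top by simp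
    have eW: "e k \<in> W" for k
    proof (induction k)
      case 0 thus ?case by (rule e0W)
    next
      case (Suc k)
      have eq: "e (Suc k) = (\<lambda>j. 1 * A (e k) j + (- th k) * e k j)" by (simp add: RA_e fun_eq_iff)
      from subsp_lin[OF WS submod_A[OF Wsub Suc] Suc, of 1 "- th k"] show ?case unfolding eq .
    qed
    have "coord_space d \<subseteq> W"
    proof
      fix x :: "nat \<Rightarrow> 'a" assume x: "x \<in> coord_space d"
      have "(\<lambda>j. \<Sum>k\<in>{..d}. x k * e k j) \<in> W"
        by (rule subsp_sum[OF WS, of "{..d}" "\<lambda>k j. x k * e k j"]) (auto intro: subsp_smult[OF WS eW])
      thus "x \<in> W" using V_repr[OF x] by simp
    qed
    thus ?thesis using WV by blast
  qed
qed


lemma not_irr: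
  assumes "is_submodule (coord_space d) ops W" "w \<in> W" "w \<noteq> (\<lambda>_. 0)" "v \<in> coord_space d" "v \<notin> W"
  shows "\<not> R_irreducible a b c d"
proof
  assume "R_irreducible a b c d"
  hence "W = {\<lambda>_. 0} \<or> W = coord_space d" using assms(1) by (simp add: R_irreducible_def irreducible_module_def)
  thus False using assms(2-5) by auto
qed

lemma red_ph:
  assumes k: "1 \<le> k" "k \<le> d" and p: "ph k = 0"
  shows "\<not> R_irreducible a b c d"
proof -
  define W where "W = {x \<in> coord_space d. \<forall>j<k. x j = (0::'a)}"
  have WV: "W \<subseteq> coord_space d" by (auto simp: W_def)
  have WS: "subsp W" by (auto simp: subsp_def W_def coord_space_def)
  have WA: "\<forall>x\<in>W. A x \<in> W" by (auto simp: W_def RA_def coord_space_def)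
  have WB: "\<forall>x\<in>W. B x \<in> W"
  proof
    fix x assume x: "x \<in> W"
    have "B x j = 0" if j: "j < k" for j
    proof (cases "Suc j = k")
      case True thus ?thesis using x j p by (auto simp: W_def RB_def)
    next
      case False thus ?thesis using x j by (auto simp: W_def RB_def)
    qed
    thus "B x \<in> W" by (simp add: W_def RB_V)
  qed
  have sub: "is_submodule (coord_space d) ops W" by (rule sub_of_AB[OF WV WS WA WB])
  have ekW: "e k \<in> W" using k by (auto simp: W_def e_def coord_space_def)
  have eknz: "e k \<noteq> (\<lambda>_. 0)"
  proof
    assume "e k = (\<lambda>_. 0)" hence "e k k = 0" by simp
    thus False using k by (simp add: e_def)
  qed
  have e0: "e 0 \<notin> W" using k by (auto simp: W_def e_def)
  show ?thesis by (rule not_irr[OF sub ekW eknz e_V e0])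
qed

lemma u_tri': "i \<le> d \<Longrightarrow> u i (d - i) = 1 \<and> (\<forall>j > d - i. u i j = 0)"
  using u_tri[of "d - i"] by simp

lemma red_ps:
  assumes k: "1 \<le> k" "k \<le> d" and p: "ps k = 0"
  shows "\<not> R_irreducible a b c d"
proof -
  define W where "W = {x. \<exists>cs. x = (\<lambda>j. \<Sum>i<k. cs i * u i j)}"
  have W0: "(\<lambda>_. 0) \<in> W" unfolding W_def
    by (auto intro!: exI[of _ "\<lambda>_. 0"])
  have Wadd: "(\<lambda>j. x j + y j) \<in> W" if xW: "x \<in> W" and yW: "y \<in> W" for x y
  proof -
    obtain cs where "x = (\<lambda>j. \<Sum>i<k. cs i * u i j)" using xW by (auto simp: W_def)
    moreover obtain cs' where "y = (\<lambda>j. \<Sum>i<k. cs' i * u i j)" using yW by (auto simp: W_def)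
    ultimately show ?thesis unfolding W_def
      by (auto intro!: exI[of _ "\<lambda>i. cs i + cs' i"] simp: sum.distrib distrib_right)
  qed
  have Wsm: "(\<lambda>j. s * x j) \<in> W" if xW: "x \<in> W" for x s
  proof -
    obtain cs where "x = (\<lambda>j. \<Sum>i<k. cs i * u i j)" using xW by (auto simp: W_def)
    thus ?thesis unfolding W_def
      by (auto intro!: exI[of _ "\<lambda>i. s * cs i"] simp: sum_distrib_left mult.assoc)
  qed
  have WS: "subsp W" unfolding subsp_def using W0 Wadd Wsm by blast
  have WV: "W \<subseteq> coord_space d"
  proof
    fix x assume "x \<in> W"
    then obtain cs where x: "x = (\<lambda>j. \<Sum>i<k. cs i * u i j)" by (auto simp: W_def)
    have "\<forall>j>d. u i j = 0" for i using u_V[of i] by (simp add: coord_space_def)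
    thus "x \<in> coord_space d" unfolding x by (simp add: coord_space_def)
  qed
  have uW: "l < k \<Longrightarrow> u l \<in> W" for l
  proof -
    assume l: "l < k"
    have "u l = (\<lambda>j. \<Sum>i<k. (if i = l then 1 else 0) * u i j)"
    proof
      fix j
      have "(\<Sum>i<k. (if i = l then 1 else 0) * u i j) = (\<Sum>i<k. if i = l then u l j else 0)"
        by (rule sum.cong) auto
      also have "\<dots> = u l j" using l by simp
      finally show "u l j = (\<Sum>i<k. (if i = l then 1 else 0) * u i j)" by simp
    qed
    thus ?thesis unfolding W_def by (intro CollectI exI)
  qed
  have comb: "(\<forall>i<k. f i \<in> W) \<Longrightarrow> (\<lambda>j. \<Sum>i<k. cs i * f i j) \<in> W" for f cs
    by (rule subsp_sum[OF WS, of "{..<k}" "\<lambda>i j. cs i * f i j"]) (auto intro: subsp_smult[OF WS])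
  have AuW: "i < k \<Longrightarrow> A (u i) \<in> W" for i
  proof -
    assume i: "i < k"
    show ?thesis
    proof (cases i)
      case 0
      show ?thesis unfolding 0 A_u0 by (rule subsp_smult[OF WS uW]) (use i 0 in simp)
    next
      case (Suc i')
      have "A (u i) = (\<lambda>j. th i * u i j + 1 * u (i - 1) j)" using A_u[of i] i k Suc by simp
      moreover have "(\<lambda>j. th i * u i j + 1 * u (i - 1) j) \<in> W"
        by (rule subsp_lin[OF WS]) (use i Suc uW in auto)
      ultimately show ?thesis by simp
    qed
  qed
  have BuW: "i < k \<Longrightarrow> B (u i) \<in> W" for i
  proof -
    assume i: "i < k"
    have Bu: "B (u i) = (\<lambda>j. ts (d - i) * u i j + ps (Suc i) * u (Suc i) j)" using B_u[of i] i k by simp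
    show ?thesis
    proof (cases "Suc i = k")
      case True
      have "B (u i) = (\<lambda>j. ts (d - i) * u i j)" using Bu True p by simp
      thus ?thesis using subsp_smult[OF WS uW[OF i]] by simp
    next
      case False
      hence "Suc i < k" using i by simp
      thus ?thesis unfolding Bu by (intro subsp_lin[OF WS] uW i)
    qed
  qed
  have WA: "\<forall>x\<in>W. A x \<in> W"
  proof
    fix x assume "x \<in> W"
    then obtain cs where x: "x = (\<lambda>j. \<Sum>i<k. cs i * u i j)" by (auto simp: W_def)
    have "A x = (\<lambda>j. \<Sum>i<k. cs i * A (u i) j)" unfolding x by (simp add: RA_sum RA_smult)
    thus "A x \<in> W" using comb[of "\<lambda>i. A (u i)" cs] AuW by simp
  qed
  have WB: "\<forall>x\<in>W. B x \<in> W"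
  proof
    fix x assume "x \<in> W"
    then obtain cs where x: "x = (\<lambda>j. \<Sum>i<k. cs i * u i j)" by (auto simp: W_def)
    have "B x = (\<lambda>j. \<Sum>i<k. cs i * B (u i) j)" unfolding x by (simp add: RB_sum RB_smult)
    thus "B x \<in> W" using comb[of "\<lambda>i. B (u i)" cs] BuW by simp
  qed
  have sub: "is_submodule (coord_space d) ops W" by (rule sub_of_AB[OF WV WS WA WB])
  have u0W: "u 0 \<in> W" using uW k by simp
  have u0nz: "u 0 \<noteq> (\<lambda>_. 0)"
  proof
    assume "u 0 = (\<lambda>_. 0)" hence "u 0 d = 0" by simp
    thus False using u_tri'[of 0] by simp
  qed
  have e0: "e 0 \<notin> W"
  proof
    assume "e 0 \<in> W"
    then obtain cs where ecs: "e 0 = (\<lambda>j. \<Sum>i<k. cs i * u i j)" by (auto simp: W_def)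
    have cs0: "i < k \<Longrightarrow> cs i = 0" for i
    proof (induction i rule: less_induct)
      case (less i)
      have id: "i \<le> d" using less.prems k by simp
      have "e 0 (d - i) = 0" using less.prems k by (simp add: e_def)
      hence "0 = (\<Sum>i'<k. cs i' * u i' (d - i))" using ecs by metis
      also have "\<dots> = (\<Sum>i'<k. if i' = i then cs i else 0)"
      proof (rule sum.cong)
        fix i' assume i': "i' \<in> {..<k}"
        show "cs i' * u i' (d - i) = (if i' = i then cs i else 0)"
        proof (cases "i' < i")
          case True thus ?thesis using less.IH[of i'] less.prems by simp
        next
          case False
          show ?thesis
          proof (cases "i' = i")
            case True thus ?thesis using u_tri'[OF id] by simp
          next
            case False2: False
            hence "i < i'" using False by simp
            moreover have "i' \<le> d" using i' k by simp
            ultimately have "u i' (d - i) = 0" using u_tri'[of i'] id by simp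
            thus ?thesis using False2 by simp
          qed
        qed
      qed simp
      also have "\<dots> = cs i" using less.prems by simp
      finally show ?case by simp
    qed
    have "e 0 = (\<lambda>_. 0)" unfolding ecs using cs0 by simp
    thus False using e_nz by simp
  qed
  show ?thesis by (rule not_irr[OF sub u0W u0nz e_V e0])
qed


lemma ph_nz_iff:
  assumes k: "1 \<le> k" "k \<le> d"
  shows "ph k \<noteq> 0 \<longleftrightarrow> (of_nat k \<noteq> (0::'a) \<and> of_nat (d + 1 - k) \<noteq> (0::'a)
     \<and> a + b + c + 1 \<noteq> of_nat d / 2 - of_nat (d + 1 - k) \<and> a + b - c \<noteq> of_nat d / 2 - of_nat (d + 1 - k))"
proof -
  obtain h :: 'a where h: "of_nat d / 2 = h" "of_nat d = 2 * h" using hdef by metis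
  have n: "of_nat (d + 1 - k) = (of_nat d + 1 - of_nat k :: 'a)" using k by (simp add: of_nat_diff)
  have f2: "(of_nat k - of_nat d - 1 :: 'a) = - 1 * (of_nat (d + 1 - k) - 0)" unfolding n by simp
  have f3: "a + b + c + of_nat d / 2 - of_nat k + 2 = (a + b + c + 1) - (of_nat d / 2 - of_nat (d + 1 - k))"
    unfolding n h(1) unfolding h(2) by algebra
  have f4: "a + b - c + of_nat d / 2 - of_nat k + 1 = (a + b - c) - (of_nat d / 2 - of_nat (d + 1 - k))"
    unfolding n h(1) unfolding h(2) by algebra
  show ?thesis unfolding racah_phi_def f2 f3 f4 by (simp only: mult_eq_0_iff right_minus_eq de_Morgan_disj neg_equal_0_iff_equal diff_0_right mult_minus1 conj_assoc)
qed

lemma ps_nz_iff: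
  assumes k: "1 \<le> k" "k \<le> d"
  shows "ps k \<noteq> 0 \<longleftrightarrow> (of_nat k \<noteq> (0::'a) \<and> of_nat (d + 1 - k) \<noteq> (0::'a)
     \<and> - a + b + c \<noteq> of_nat d / 2 - of_nat k \<and> a - b + c \<noteq> of_nat d / 2 - of_nat (d + 1 - k))"
proof -
  obtain h :: 'a where h: "of_nat d / 2 = h" "of_nat d = 2 * h" using hdef by metis
  have n: "of_nat (d + 1 - k) = (of_nat d + 1 - of_nat k :: 'a)" using k by (simp add: of_nat_diff)
  have f2: "(of_nat k - of_nat d - 1 :: 'a) = - 1 * (of_nat (d + 1 - k) - 0)" unfolding n by simp
  have f3: "a - b - c + of_nat d / 2 - of_nat k = - 1 * ((- a + b + c) - (of_nat d / 2 - of_nat k))"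
    unfolding h(1) by algebra
  have f4: "a - b + c + of_nat d / 2 - of_nat k + 1 = (a - b + c) - (of_nat d / 2 - of_nat (d + 1 - k))"
    unfolding n h(1) unfolding h(2) by algebra
  show ?thesis unfolding ps_def f2 f3 f4 by (simp only: mult_eq_0_iff right_minus_eq de_Morgan_disj neg_equal_0_iff_equal diff_0_right mult_minus1 conj_assoc)
qed


end

lemma char_nz:
  assumes "CHAR('a::field) = 0 \<or> CHAR('a) > d" "1 \<le> n" "n \<le> d"
  shows "of_nat n \<noteq> (0::'a)"
proof
  assume "of_nat n = (0::'a)"
  hence dv: "CHAR('a) dvd n" by (simp add: of_nat_eq_0_iff_char_dvd)
  show False
  proof (cases "CHAR('a) = 0")
    case True thus False using dv assms by simp
  next
    case False
    hence "CHAR('a) > d" using assms by simp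
    moreover have "CHAR('a) \<le> n" using dv assms by (simp add: dvd_imp_le)
    ultimately show False using assms by simp
  qed
qed

theorem theorem4p5:
  fixes a b c :: "'a::alg_closed_field" and d :: nat
  assumes "CHAR('a) \<noteq> 2"
  shows "R_irreducible a b c d \<longleftrightarrow>
    ((CHAR('a) = 0 \<or> CHAR('a) > d) \<and>
     (\<forall>i\<in>{1..d}. a + b + c + 1 \<noteq> of_nat d / 2 - of_nat i
                  \<and> - a + b + c \<noteq> of_nat d / 2 - of_nat i
                  \<and> a - b + c \<noteq> of_nat d / 2 - of_nat i
                  \<and> a + b - c \<noteq> of_nat d / 2 - of_nat i))"
proof -
  have two: "(2::'a) \<noteq> 0"
  proof
    assume "(2::'a) = 0"
    hence "of_nat 2 = (0::'a)" by simp
    hence dv: "CHAR('a) dvd 2" by (simp only: of_nat_eq_0_iff_char_dvd)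
    have "CHAR('a) \<noteq> 0"
    proof
      assume "CHAR('a) = 0"
      hence "(0::nat) dvd 2" using dv by metis
      thus False by simp
    qed
    moreover have "CHAR('a) \<le> 2" using dv by (simp add: dvd_imp_le)
    moreover have "CHAR('a) \<noteq> Suc 0" by (rule CHAR_not_1)
    ultimately have "CHAR('a) = 2" by linarith
    thus False using assms by simp
  qed
  interpret R: racah a b c d by unfold_locales (rule two)
  define P where "P \<longleftrightarrow> (\<forall>k\<in>{1..d}. racah_phi a b c d k \<noteq> 0 \<and> R.ps k \<noteq> 0)"
  have irrP: "R_irreducible a b c d \<longleftrightarrow> P"
  proof
    assume irr: "R_irreducible a b c d"
    show P unfolding P_def
    proof (rule ccontr)
      assume "\<not> (\<forall>k\<in>{1..d}. racah_phi a b c d k \<noteq> 0 \<and> R.ps k \<noteq> 0)"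
      then obtain k where k: "1 \<le> k" "k \<le> d" and z: "racah_phi a b c d k = 0 \<or> R.ps k = 0" by auto
      thus False using R.red_ph[OF k] R.red_ps[OF k] irr by blast
    qed
  next
    assume P thus "R_irreducible a b c d" unfolding P_def by (rule R.irr)
  qed
  let ?RHS = "(CHAR('a) = 0 \<or> CHAR('a) > d) \<and>
     (\<forall>i\<in>{1..d}. a + b + c + 1 \<noteq> of_nat d / 2 - of_nat i
                  \<and> - a + b + c \<noteq> of_nat d / 2 - of_nat i
                  \<and> a - b + c \<noteq> of_nat d / 2 - of_nat i
                  \<and> a + b - c \<noteq> of_nat d / 2 - of_nat i)"
  have "P \<longleftrightarrow> ?RHS"
  proof
    assume P
    have ch: "CHAR('a) = 0 \<or> CHAR('a) > d"
    proof (rule ccontr)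
      assume "\<not> (CHAR('a) = 0 \<or> CHAR('a) > d)"
      hence k: "1 \<le> CHAR('a)" "CHAR('a) \<le> d" by auto
      have "racah_phi a b c d (CHAR('a)) \<noteq> 0" using \<open>P\<close> k unfolding P_def by auto
      thus False using R.ph_nz_iff[OF k] by simp
    qed
    have conds: "a + b + c + 1 \<noteq> of_nat d / 2 - of_nat i
                  \<and> - a + b + c \<noteq> of_nat d / 2 - of_nat i
                  \<and> a - b + c \<noteq> of_nat d / 2 - of_nat i
                  \<and> a + b - c \<noteq> of_nat d / 2 - of_nat i" if i: "i \<in> {1..d}" for i
    proof -
      define k1 where "k1 = d + 1 - i"
      have k1: "1 \<le> k1" "k1 \<le> d" "d + 1 - k1 = i" using i k1_def by auto
      have i': "1 \<le> i" "i \<le> d" using i by auto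
      have A1: "racah_phi a b c d k1 \<noteq> 0" "R.ps k1 \<noteq> 0" using \<open>P\<close> k1 unfolding P_def by auto
      have A2: "R.ps i \<noteq> 0" using \<open>P\<close> i unfolding P_def by auto
      show ?thesis using A1 A2 R.ph_nz_iff[OF k1(1,2)] R.ps_nz_iff[OF k1(1,2)] R.ps_nz_iff[OF i'] k1(3)
        by simp
    qed
    show ?RHS using ch conds by blast
  next
    assume rhs: ?RHS
    hence ch: "CHAR('a) = 0 \<or> CHAR('a) > d" by blast
    show P unfolding P_def
    proof
      fix k assume k: "k \<in> {1..d}"
      hence k': "1 \<le> k" "k \<le> d" by auto
      define i1 where "i1 = d + 1 - k"
      have i1: "i1 \<in> {1..d}" "1 \<le> i1" "i1 \<le> d" using k' i1_def by auto
      have n1: "of_nat k \<noteq> (0::'a)" by (rule char_nz[OF ch k'])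
      have n2: "of_nat i1 \<noteq> (0::'a)" by (rule char_nz[OF ch i1(2,3)])
      have c1: "a + b + c + 1 \<noteq> of_nat d / 2 - of_nat i1" "a - b + c \<noteq> of_nat d / 2 - of_nat i1"
        "a + b - c \<noteq> of_nat d / 2 - of_nat i1" using rhs i1(1) by blast+
      have c2: "- a + b + c \<noteq> of_nat d / 2 - of_nat k" using rhs k by blast
      show "racah_phi a b c d k \<noteq> 0 \<and> R.ps k \<noteq> 0"
        using R.ph_nz_iff[OF k'] R.ps_nz_iff[OF k'] n1 n2 c1 c2 i1_def by simp
    qed
  qed
  thus ?thesis using irrP by simp
qed

end
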